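(* Let $\beta>0$, $\rho>0$, let $f,c_i$ ($i\in\mathcal I=\{1,\dots,m\}$) be differentiable, let $(x_k,u_k)\in\mathbb{R}^n\times\mathbb{R}^m$, and let $H_k$ be a symmetric $n\times n$ matrix. Write $c_{ki}=c_i(x_k)$, $\nabla c_{ki}=\nabla c_i(x_k)$, $\nabla f_k=\nabla f(x_k)$, $y_{ki}=y_i(x_k,u_k;\beta,\rho)$, $\lambda_{ki}=\lambda_i(x_k,u_k;\beta,\rho)$, $\nu_{ki}=\lambda_{ki}/(y_{ki}+\lambda_{ki})$, $w_{ki}=\rho\beta/(y_{ki}+\lambda_{ki})^2$, and $B_k=H_k+\sum_{i}\nu_{ki}\nabla c_{ki}\nabla c_{ki}^T$. For $d=(d_x,d_u)\in\mathbb{R}^n\times\mathbb{R}^m$ consider the QP $$\min\ q_k(d)=\Big(\rho\nabla f_k+\sum_i\lambda_{ki}\nabla c_{ki}\Big)^Td_x+\tfrac12 d^TQ_kd\quad\text{s.t.}\quad \nu_{ki}\nabla c_{ki}^Td_x-\rho\frac{y_{ki}}{y_{ki}+\lambda_{ki}}d_{ui}=-(c_{ki}+y_{ki}),\ i\in\mathcal I,$$ where $Q_k=\begin{pmatrix}H_k+\sum_i w_{ki}\nabla c_{ki}\nabla c_{ki}^T & G_k\\ G_k^T & \mathrm{diag}(\rho^2w_{k1},\dots,\rho^2w_{km})\end{pmatrix}$ with $G_k$ the $n\times m$ matrix whose $i$th column is $\rho w_{ki}\nabla c_{ki}$. Then: (1) Any KKT point (in particular any solution) $d=(d_x,d_u)$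 of this QP satisfies the Newton system $$B_kd_x+\sum_i\rho\nu_{ki}d_{ui}\nabla c_{ki}=-\Big(\rho\nabla f_k+\sum_i\lambda_{ki}\nabla c_{ki}\Big),\qquad \rho\nu_{ki}\nabla c_{ki}^Td_x-\rho^2\frac{y_{ki}}{y_{ki}+\lambda_{ki}}d_{ui}=-\rho(c_{ki}+y_{ki}),\ i\in\mathcal I.$$ (2) If $d_x^TH_kd_x+\sum_i\nu_{ki}(\nabla c_{ki}^Td_x)^2>0$ for all nonzero $d_x\in\mathbb{R}^n$, then the QP has a unique solution, and hence the Newton system in (1) is consistent.
   Context: For $\beta,\rho>0$: $y_i(x,u;\beta,\rho)=\tfrac12[\sqrt{(c_i(x)+\rho u_i)^2+4\rho\beta}-(c_i(x)+\rho u_i)]$, $\lambda_i(x,u;\beta,\rho)=\tfrac12[\sqrt{(c_i(x)+\rho u_i)^2+4\rho\beta}+(c_i(x)+\rho u_i)]$; both are positive and $\lambda_iy_i=\rho\beta$. *)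

theory Defs
  imports "HOL-Analysis.Analysis"
begin

text \<open>Data: beta, rho > 0; constraint functions c i (i ranges over the finite
index type 'm, playing the role of {1..m}) with gradients gc i; gradient gf of f;
symmetric matrix H; current iterate (x, u).\<close>

definition yk :: "real \<Rightarrow> real \<Rightarrow> ('m \<Rightarrow> real^'n \<Rightarrow> real) \<Rightarrow> real^'n \<Rightarrow> real^'m \<Rightarrow> 'm \<Rightarrow> real" where
  "yk \<beta> \<rho> c x u i = (sqrt ((c i x + \<rho> * u$i)^2 + 4*\<rho>*\<beta>) - (c i x + \<rho> * u$i)) / 2"

definition lamk :: "real \<Rightarrow> real \<Rightarrow> ('m \<Rightarrow> real^'n \<Rightarrow> real) \<Rightarrow> real^'n \<Rightarrow> real^'m \<Rightarrow> 'm \<Rightarrow> real" where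
  "lamk \<beta> \<rho> c x u i = (sqrt ((c i x + \<rho> * u$i)^2 + 4*\<rho>*\<beta>) + (c i x + \<rho> * u$i)) / 2"

definition nuk :: "real \<Rightarrow> real \<Rightarrow> ('m \<Rightarrow> real^'n \<Rightarrow> real) \<Rightarrow> real^'n \<Rightarrow> real^'m \<Rightarrow> 'm \<Rightarrow> real" where
  "nuk \<beta> \<rho> c x u i = lamk \<beta> \<rho> c x u i / (yk \<beta> \<rho> c x u i + lamk \<beta> \<rho> c x u i)"

definition wk :: "real \<Rightarrow> real \<Rightarrow> ('m \<Rightarrow> real^'n \<Rightarrow> real) \<Rightarrow> real^'n \<Rightarrow> real^'m \<Rightarrow> 'm \<Rightarrow> real" where
  "wk \<beta> \<rho> c x u i = \<rho> * \<beta> / (yk \<beta> \<rho> c x u i + lamk \<beta> \<rho> c x u i)^2"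

definition outer :: "real^'n \<Rightarrow> real^'n^'n" where
  "outer v = (\<chi> a b. v$a * v$b)"

definition Bk :: "real \<Rightarrow> real \<Rightarrow> ('m::finite \<Rightarrow> real^'n \<Rightarrow> real) \<Rightarrow> ('m \<Rightarrow> real^'n \<Rightarrow> real^'n)
    \<Rightarrow> real^'n^'n \<Rightarrow> real^'n \<Rightarrow> real^'m \<Rightarrow> real^'n^'n" where
  "Bk \<beta> \<rho> c gc H x u = H + (\<Sum>i\<in>UNIV. nuk \<beta> \<rho> c x u i *\<^sub>R outer (gc i x))"

definition gk :: "real \<Rightarrow> real \<Rightarrow> (real^'n \<Rightarrow> real^'n) \<Rightarrow> ('m::finite \<Rightarrow> real^'n \<Rightarrow> real)
    \<Rightarrow> ('m \<Rightarrow> real^'n \<Rightarrow> real^'n) \<Rightarrow> real^'n \<Rightarrow> real^'m \<Rightarrow> real^'n" where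
  "gk \<beta> \<rho> gf c gc x u = \<rho> *\<^sub>R gf x + (\<Sum>i\<in>UNIV. lamk \<beta> \<rho> c x u i *\<^sub>R gc i x)"

definition Q11 :: "real \<Rightarrow> real \<Rightarrow> ('m::finite \<Rightarrow> real^'n \<Rightarrow> real) \<Rightarrow> ('m \<Rightarrow> real^'n \<Rightarrow> real^'n)
    \<Rightarrow> real^'n^'n \<Rightarrow> real^'n \<Rightarrow> real^'m \<Rightarrow> real^'n^'n" where
  "Q11 \<beta> \<rho> c gc H x u = H + (\<Sum>i\<in>UNIV. wk \<beta> \<rho> c x u i *\<^sub>R outer (gc i x))"

definition Gk :: "real \<Rightarrow> real \<Rightarrow> ('m \<Rightarrow> real^'n \<Rightarrow> real) \<Rightarrow> ('m \<Rightarrow> real^'n \<Rightarrow> real^'n)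
    \<Rightarrow> real^'n \<Rightarrow> real^'m \<Rightarrow> real^'m^'n" where
  "Gk \<beta> \<rho> c gc x u = (\<chi> a i. \<rho> * wk \<beta> \<rho> c x u i * (gc i x)$a)"

definition Dk :: "real \<Rightarrow> real \<Rightarrow> ('m \<Rightarrow> real^'n \<Rightarrow> real) \<Rightarrow> real^'n \<Rightarrow> real^'m \<Rightarrow> real^'m^'m" where
  "Dk \<beta> \<rho> c x u = (\<chi> i j. if i = j then \<rho>^2 * wk \<beta> \<rho> c x u i else 0)"

definition Qmul :: "real \<Rightarrow> real \<Rightarrow> ('m::finite \<Rightarrow> real^'n \<Rightarrow> real) \<Rightarrow> ('m \<Rightarrow> real^'n \<Rightarrow> real^'n)
    \<Rightarrow> real^'n^'n \<Rightarrow> real^'n \<Rightarrow> real^'m \<Rightarrow> (real^'n) \<times> (real^'m) \<Rightarrow> (real^'n) \<times> (real^'m)" where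
  "Qmul \<beta> \<rho> c gc H x u d =
     (Q11 \<beta> \<rho> c gc H x u *v fst d + Gk \<beta> \<rho> c gc x u *v snd d,
      transpose (Gk \<beta> \<rho> c gc x u) *v fst d + Dk \<beta> \<rho> c x u *v snd d)"

definition qobj :: "real \<Rightarrow> real \<Rightarrow> (real^'n \<Rightarrow> real^'n) \<Rightarrow> ('m::finite \<Rightarrow> real^'n \<Rightarrow> real)
    \<Rightarrow> ('m \<Rightarrow> real^'n \<Rightarrow> real^'n) \<Rightarrow> real^'n^'n \<Rightarrow> real^'n \<Rightarrow> real^'m \<Rightarrow> (real^'n) \<times> (real^'m) \<Rightarrow> real" where
  "qobj \<beta> \<rho> gf c gc H x u d =
     gk \<beta> \<rho> gf c gc x u \<bullet> fst d + (1/2) * (d \<bullet> Qmul \<beta> \<rho> c gc H x u d)"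

definition qp_feasible :: "real \<Rightarrow> real \<Rightarrow> ('m \<Rightarrow> real^'n \<Rightarrow> real)
    \<Rightarrow> ('m \<Rightarrow> real^'n \<Rightarrow> real^'n) \<Rightarrow> real^'n \<Rightarrow> real^'m \<Rightarrow> (real^'n) \<times> (real^'m) \<Rightarrow> bool" where
  "qp_feasible \<beta> \<rho> c gc x u d \<longleftrightarrow>
     (\<forall>i. nuk \<beta> \<rho> c x u i * (gc i x \<bullet> fst d)
          - \<rho> * (yk \<beta> \<rho> c x u i / (yk \<beta> \<rho> c x u i + lamk \<beta> \<rho> c x u i)) * (snd d)$i
          = - (c i x + yk \<beta> \<rho> c x u i))"

text \<open>KKT point of the QP: feasibility plus stationarity of the Lagrangian
  (gradient of q_k is (g,0) + Q_k d since Q_k is symmetric; the gradient of the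
  i-th constraint is (nu_ki grad c_ki, - rho y_ki/(y_ki+lambda_ki) e_i)).\<close>
definition qp_kkt :: "real \<Rightarrow> real \<Rightarrow> (real^'n \<Rightarrow> real^'n) \<Rightarrow> ('m::finite \<Rightarrow> real^'n \<Rightarrow> real)
    \<Rightarrow> ('m \<Rightarrow> real^'n \<Rightarrow> real^'n) \<Rightarrow> real^'n^'n \<Rightarrow> real^'n \<Rightarrow> real^'m \<Rightarrow> (real^'n) \<times> (real^'m) \<Rightarrow> bool" where
  "qp_kkt \<beta> \<rho> gf c gc H x u d \<longleftrightarrow>
     qp_feasible \<beta> \<rho> c gc x u d \<and>
     (\<exists>\<mu>::real^'m. (gk \<beta> \<rho> gf c gc x u, 0) + Qmul \<beta> \<rho> c gc H x u d
        + (\<Sum>i\<in>UNIV. \<mu>$i *\<^sub>R (nuk \<beta> \<rho> c x u i *\<^sub>R gc i x,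
              (- (\<rho> * (yk \<beta> \<rho> c x u i / (yk \<beta> \<rho> c x u i + lamk \<beta> \<rho> c x u i)))) *\<^sub>R axis i 1))
        = 0)"

definition qp_solution :: "real \<Rightarrow> real \<Rightarrow> (real^'n \<Rightarrow> real^'n) \<Rightarrow> ('m::finite \<Rightarrow> real^'n \<Rightarrow> real)
    \<Rightarrow> ('m \<Rightarrow> real^'n \<Rightarrow> real^'n) \<Rightarrow> real^'n^'n \<Rightarrow> real^'n \<Rightarrow> real^'m \<Rightarrow> (real^'n) \<times> (real^'m) \<Rightarrow> bool" where
  "qp_solution \<beta> \<rho> gf c gc H x u d \<longleftrightarrow>
     qp_feasible \<beta> \<rho> c gc x u d \<and>
     (\<forall>d'. qp_feasible \<beta> \<rho> c gc x u d' \<longrightarrow> qobj \<beta> \<rho> gf c gc H x u d \<le> qobj \<beta> \<rho> gf c gc H x u d')"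

definition newton_sys :: "real \<Rightarrow> real \<Rightarrow> (real^'n \<Rightarrow> real^'n) \<Rightarrow> ('m::finite \<Rightarrow> real^'n \<Rightarrow> real)
    \<Rightarrow> ('m \<Rightarrow> real^'n \<Rightarrow> real^'n) \<Rightarrow> real^'n^'n \<Rightarrow> real^'n \<Rightarrow> real^'m \<Rightarrow> (real^'n) \<times> (real^'m) \<Rightarrow> bool" where
  "newton_sys \<beta> \<rho> gf c gc H x u d \<longleftrightarrow>
     Bk \<beta> \<rho> c gc H x u *v fst d
       + (\<Sum>i\<in>UNIV. (\<rho> * nuk \<beta> \<rho> c x u i * (snd d)$i) *\<^sub>R gc i x)
       = - gk \<beta> \<rho> gf c gc x u
   \<and> (\<forall>i. \<rho> * nuk \<beta> \<rho> c x u i * (gc i x \<bullet> fst d)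
          - \<rho>^2 * (yk \<beta> \<rho> c x u i / (yk \<beta> \<rho> c x u i + lamk \<beta> \<rho> c x u i)) * (snd d)$i
          = - \<rho> * (c i x + yk \<beta> \<rho> c x u i))"

end

theory Submission imports Defs begin

lemma coefEQE: fixes t r nu p dl :: real
  assumes "t > 0" "r > 0" "nu + t = 1" "r * t * dl = nu * p"
  shows "(nu*t) * p * p + r * (nu*t) * dl * p + dl * (r * (nu*t) * p + r^2 * (nu*t) * dl)
     = nu * p^2 / t"
proof -
  have 1: "(nu*t) * p * p + r * (nu*t) * dl * p + dl * (r * (nu*t) * p + r^2 * (nu*t) * dl)
     = nu*t*p*p + 2*nu*p*(r*t*dl) + nu*(r*dl)*(r*t*dl)" by (simp add: algebra_simps power2_eq_square)
  have 2: "r*dl = nu*p/t" using assms(1,4) by (simp add: field_simps)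
  have 3: "nu*t*p*p + 2*nu*p*(nu*p) + nu*(nu*p/t)*(nu*p) = nu*p^2*(t+nu)^2/t"
    using assms(1) by (simp add: field_simps power2_eq_square)
  have 4: "t + nu = 1" using assms(3) by simp
  show ?thesis unfolding 1 2 assms(4) 3 4 by simp
qed

lemma g1: fixes t r n a a2 vv vv2 :: real
  assumes "t > 0" "r > 0" "n*a2 - r*t* vv2 = z" "n*a - r*t* vv = z"
  shows "vv2 = vv + n*(a2-a)/(r*t)"
  using assms by (simp add: field_simps)

lemma g2: fixes t r n a b vv :: real
  assumes "t > 0" "r > 0"
  shows "n*(a+b) - r*t*(vv + n*b/(r*t)) = n*a - r*t* vv"
  using assms by (simp add: field_simps)

lemma g3: fixes t r z :: real
  assumes "t > 0" "r > 0"
  shows "n*0 - r*t*(z/(r*t)) = -z"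
  using assms by (simp add: field_simps)

lemma g4: fixes t r q m :: real
  assumes "t > 0" "r > 0" "q + m * (- (r * t)) = 0"
  shows "m = q / (r*t)"
  using assms by (simp add: field_simps)

lemma coefR: fixes t r nu p q :: real
  assumes "t > 0" "r > 0" "nu + t = 1"
  shows "(nu*t)*p + r*(nu*t)*q + (r*(nu*t)*p + r^2*(nu*t)*q)/(r*t)*nu = nu*p + r*nu*q"
proof -
  have e: "r*(nu*t)*p + r^2*(nu*t)*q = (r*t)*(nu*(p+r*q))" by (simp add: algebra_simps power2_eq_square)
  have rt: "r*t \<noteq> 0" using assms by simp
  have "(r*(nu*t)*p + r^2*(nu*t)*q)/(r*t)*nu = nu*(p+r*q)*nu" unfolding e using rt by simp
  then have "(nu*t)*p + r*(nu*t)*q + (r*(nu*t)*p + r^2*(nu*t)*q)/(r*t)*nu = nu*(p+r*q)*(nu+t)"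
    by (simp add: algebra_simps)
  then show ?thesis using assms(3) by (simp add: algebra_simps)
qed

lemma g5: fixes r n a t vv z :: real
  assumes "n*a - r*t* vv = -z" shows "r*n*a - r^2*t* vv = -r*z"
proof -
  have "r*(n*a - r*t* vv) = r*(-z)" using assms by simp
  then show ?thesis by (simp add: algebra_simps power2_eq_square)
qed

lemma outer_mv: "outer a *v v = (a \<bullet> v) *\<^sub>R (a::real^'n)"
  by (simp add: vec_eq_iff outer_def matrix_vector_mult_def inner_vec_def sum_distrib_left mult.commute mult.left_commute)

lemma sum_mv: fixes M :: "'i \<Rightarrow> real^'n^'k"
  shows "(\<Sum>i\<in>S. f i *\<^sub>R M i) *v v = (\<Sum>i\<in>S. f i *\<^sub>R (M i *v v))"
proof (induction S rule: infinite_finite_induct)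
  case (insert x F) then show ?case by (simp add: matrix_vector_mult_add_rdistrib scaleR_matrix_vector_assoc)
qed simp_all

lemma Gk_mv: "Gk \<beta> \<rho> c gc x u *v v = (\<Sum>i\<in>UNIV. (\<rho> * wk \<beta> \<rho> c x u i * v $ i) *\<^sub>R gc i x)"
  by (simp add: vec_eq_iff Gk_def matrix_vector_mult_def sum_component mult.commute mult.left_commute)

lemma Qfst_g: "fst (Qmul \<beta> \<rho> c gc H x u d) = H *v fst d + (\<Sum>i\<in>UNIV. (wk \<beta> \<rho> c x u i * (gc i x \<bullet> fst d) + \<rho> * wk \<beta> \<rho> c x u i * snd d $ i) *\<^sub>R gc i x)"
  unfolding Qmul_def Q11_def fst_conv matrix_vector_mult_add_rdistrib sum_mv outer_mv Gk_mv
  by (simp add: scaleR_add_left sum.distrib add.assoc)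

lemma Bmul_g: "Bk \<beta> \<rho> c gc H x u *v v = H *v v + (\<Sum>i\<in>UNIV. (nuk \<beta> \<rho> c x u i * (gc i x \<bullet> v)) *\<^sub>R gc i x)"
  unfolding Bk_def matrix_vector_mult_add_rdistrib sum_mv outer_mv by simp

lemma quad0: fixes a b :: real assumes "\<And>s. 0 \<le> s*a + s^2*b" "a \<ge> 0" shows "a = 0"
proof (rule ccontr)
  assume "a \<noteq> 0" then have a: "a > 0" using assms(2) by simp
  define m where "m = \<bar>b\<bar> + 1"
  have m: "m > 0" "b \<le> m - 1" unfolding m_def by auto
  define s where "s = -a/m"
  have 1: "0 \<le> s*a + s^2*b" using assms(1) by simp
  have "s^2*b \<le> s^2*(m-1)" by (rule mult_left_mono) (simp_all add: m)
  then have 2: "s*a + s^2*b \<le> s*a + s^2*(m-1)" by simp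
  have 3: "s*a + s^2*(m-1) = -(a^2/m^2)" unfolding s_def using m by (simp add: field_simps power2_eq_square)
  have 4: "a^2/m^2 > 0" using a m by simp
  show False using 1 2 3 4 by linarith
qed

lemma le_div_t: fixes a t :: real assumes "t > 0" "t \<le> 1" "a \<ge> 0" shows "a \<le> a / t"
proof -
  have "a * t \<le> a" using assms by (simp add: mult_left_le)
  then show ?thesis using assms(1) by (simp add: le_divide_eq)
qed

lemma vcancel: "g + (a + - (g + a)) = (0::'a::ab_group_add)" by simp

context
  fixes \<beta> \<rho> :: real and gf :: "real^'n \<Rightarrow> real^'n" and c :: "'m::finite \<Rightarrow> real^'n \<Rightarrow> real"
    and gc :: "'m \<Rightarrow> real^'n \<Rightarrow> real^'n" and H :: "real^'n^'n" and x :: "real^'n" and u :: "real^'m"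
  assumes bpos: "\<beta> > 0" and rpos: "\<rho> > 0" and Hsym: "transpose H = H"
begin

abbreviation "Y \<equiv> yk \<beta> \<rho> c x u"
abbreviation "L \<equiv> lamk \<beta> \<rho> c x u"
abbreviation "NU \<equiv> nuk \<beta> \<rho> c x u"
abbreviation "W \<equiv> wk \<beta> \<rho> c x u"
abbreviation "A i \<equiv> gc i x"
definition T where "T i = Y i / (Y i + L i)"
abbreviation "QM \<equiv> Qmul \<beta> \<rho> c gc H x u"

lemma YL: "Y i > 0" "L i > 0" "Y i * L i = \<rho> * \<beta>"
proof -
  define z where "z = c i x + \<rho> * u$i"
  define S where "S = sqrt (z^2 + 4*\<rho>*\<beta>)"
  have p: "4*\<rho>*\<beta> > 0" using bpos rpos by simp
  have nn: "0 \<le> z^2+4*\<rho>*\<beta>" proof -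
    have "0 \<le> z^2" by simp
    then show ?thesis using p by linarith
  qed
  have S2: "S^2 = z^2 + 4*\<rho>*\<beta>" unfolding S_def using real_sqrt_pow2[OF nn] .
  have Sn: "S \<ge> 0" unfolding S_def using nn by simp
  have "\<bar>z\<bar> < S" using S2 Sn p
    by (metis abs_ge_zero less_add_same_cancel1 power2_abs power_less_imp_less_base)
  then show "Y i > 0" "L i > 0" unfolding yk_def lamk_def z_def[symmetric] S_def[symmetric] by auto
  show "Y i * L i = \<rho> * \<beta>" unfolding yk_def lamk_def z_def[symmetric] S_def[symmetric]
    using S2 by (simp add: field_simps power2_eq_square)
qed

lemma Tpos: "T i > 0" "T i < 1" "NU i + T i = 1" "W i = NU i * T i" "NU i > 0"
proof -
  have a: "Y i > 0" "L i > 0" "Y i * L i = \<rho> * \<beta>" by (rule YL)+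
  then have s: "Y i + L i > 0" by simp
  show "T i > 0" using a by (simp add: T_def)
  show "T i < 1" using a s by (simp add: divide_less_eq T_def)
  show "NU i > 0" using a by (simp add: nuk_def)
  show "NU i + T i = 1" using s by (simp add: nuk_def T_def add_divide_distrib[symmetric])
  have "W i = (Y i * L i) / ((Y i + L i) * (Y i + L i))"
    unfolding wk_def a(3)[symmetric] power2_eq_square ..
  then show "W i = NU i * T i" by (simp add: nuk_def T_def mult.commute)
qed

lemma Qfst: "fst (QM d) = H *v fst d + (\<Sum>i\<in>UNIV. (W i * (A i \<bullet> fst d) + \<rho> * W i * snd d $ i) *\<^sub>R A i)"
  by (rule Qfst_g)

lemma Qsnd: "snd (QM d) $ i = \<rho> * W i * (A i \<bullet> fst d) + \<rho>^2 * W i * snd d $ i"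
  unfolding Qmul_def Dk_def Gk_def
  by (simp add: matrix_vector_mult_def transpose_def inner_vec_def sum_distrib_left algebra_simps if_distrib if_distribR)

abbreviation "EV k \<equiv> (k, (\<chi> i. NU i * (A i \<bullet> k) / (\<rho> * T i)) :: real^'m)"
abbreviation "GG \<equiv> gk \<beta> \<rho> gf c gc x u"
abbreviation "Rl d \<equiv> fst (QM d) + (\<Sum>i\<in>UNIV. (snd (QM d) $ i / (\<rho> * T i) * NU i) *\<^sub>R A i)"
abbreviation "Rv d \<equiv> GG + Rl d"

lemma QM_add: "QM (d + e) = QM d + QM e"
  unfolding Qmul_def by (simp add: algebra_simps)

lemma QM_scale: "QM (r *\<^sub>R d) = r *\<^sub>R QM d"
  unfolding Qmul_def by (simp add: algebra_simps)

lemma EV_add: "EV (k + k') = EV k + EV k'"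
  by (simp add: vec_eq_iff inner_add_right add_divide_distrib algebra_simps)

lemma EV_scale: "EV (r *\<^sub>R k) = r *\<^sub>R EV k"
  by (simp add: vec_eq_iff inner_scaleR_right)

lemma Rl_add: "Rl (d + e) = Rl d + Rl e"
  by (simp add: QM_add add_divide_distrib algebra_simps scaleR_add_left sum.distrib)

lemma Rl_scale: "Rl (r *\<^sub>R d) = r *\<^sub>R Rl d"
  by (simp add: QM_scale scaleR_right.sum scaleR_add_right mult.assoc)

lemma H_sym: "a \<bullet> (H *v b) = b \<bullet> (H *v a)"
proof -
  have "a \<bullet> (H *v b) = (a v* H) \<bullet> b" by (simp add: dot_lmul_matrix)
  also have "\<dots> = (transpose H *v a) \<bullet> b" by simp
  also have "\<dots> = b \<bullet> (H *v a)" using Hsym by (simp add: inner_commute)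
  finally show ?thesis .
qed

lemma inner_QM: "d \<bullet> QM e = fst d \<bullet> (H *v fst e) + (\<Sum>i\<in>UNIV. W i * (A i \<bullet> fst e) * (A i \<bullet> fst d)
   + \<rho> * W i * snd e $ i * (A i \<bullet> fst d) + snd d $ i * (\<rho> * W i * (A i \<bullet> fst e) + \<rho>^2 * W i * snd e $ i))"
proof -
  have "d \<bullet> QM e = fst d \<bullet> fst (QM e) + snd d \<bullet> snd (QM e)" by (simp add: inner_prod_def)
  also have "fst d \<bullet> fst (QM e) = fst d \<bullet> (H *v fst e) + (\<Sum>i\<in>UNIV. (W i * (A i \<bullet> fst e) + \<rho> * W i * snd e $ i) * (A i \<bullet> fst d))"
    by (simp add: Qfst inner_add_right inner_sum_right inner_commute)
  also have "snd d \<bullet> snd (QM e) = (\<Sum>i\<in>UNIV. snd d $ i * (\<rho> * W i * (A i \<bullet> fst e) + \<rho>^2 * W i * snd e $ i))"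
    unfolding inner_vec_def[of "snd d"] by (simp add: Qsnd)
  finally show ?thesis by (simp add: sum.distrib algebra_simps)
qed

lemma QM_sym: "d \<bullet> QM e = e \<bullet> QM d"
  unfolding inner_QM by (subst H_sym) (auto intro!: sum.cong simp: algebra_simps)

lemma qexp: "qobj \<beta> \<rho> gf c gc H x u (d + e) = qobj \<beta> \<rho> gf c gc H x u d + ((GG, 0) + QM d) \<bullet> e + 1/2 * (e \<bullet> QM e)"
proof -
  have "(d + e) \<bullet> QM (d + e) = d \<bullet> QM d + 2 * (QM d \<bullet> e) + e \<bullet> QM e"
    using QM_sym[of d e] by (simp add: QM_add inner_add_left inner_add_right inner_commute)
  then show ?thesis unfolding qobj_def by (simp add: inner_add_right inner_add_left inner_prod_def algebra_simps)
qed

lemma grad: "QM d \<bullet> EV k = Rl d \<bullet> k"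
proof -
  have "QM d \<bullet> EV k = fst (QM d) \<bullet> k + snd (QM d) \<bullet> (\<chi> i. NU i * (A i \<bullet> k) / (\<rho> * T i))"
    by (simp add: inner_prod_def)
  also have "snd (QM d) \<bullet> (\<chi> i. NU i * (A i \<bullet> k) / (\<rho> * T i)) = (\<Sum>i\<in>UNIV. snd (QM d) $ i * (NU i * (A i \<bullet> k) / (\<rho> * T i)))"
    unfolding inner_vec_def[of "snd (QM d)"] vec_lambda_beta by (simp add: inner_real_def)
  also have "Rl d \<bullet> k = fst (QM d) \<bullet> k + (\<Sum>i\<in>UNIV. (snd (QM d) $ i / (\<rho> * T i) * NU i) * (A i \<bullet> k))"
    by (simp add: inner_add_left inner_sum_left)
  moreover have "(\<Sum>i\<in>UNIV. snd (QM d) $ i * (NU i * (A i \<bullet> k) / (\<rho> * T i)))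
     = (\<Sum>i\<in>UNIV. (snd (QM d) $ i / (\<rho> * T i) * NU i) * (A i \<bullet> k))"
    by (rule sum.cong[OF refl]) (simp add: field_simps)
  ultimately show ?thesis by simp
qed

lemma grad2: "((GG, 0) + QM d) \<bullet> EV k = Rv d \<bullet> k"
  using grad by (simp add: inner_add_left inner_prod_def)


lemma EQE: "EV k \<bullet> QM (EV k) = k \<bullet> (H *v k) + (\<Sum>i\<in>UNIV. NU i * (A i \<bullet> k)^2 / T i)"
proof -
  have e: "W i * (A i \<bullet> k) * (A i \<bullet> k) + \<rho> * W i * (NU i * (A i \<bullet> k) / (\<rho> * T i)) * (A i \<bullet> k) +
         NU i * (A i \<bullet> k) / (\<rho> * T i) * (\<rho> * W i * (A i \<bullet> k) + \<rho>\<^sup>2 * W i * (NU i * (A i \<bullet> k) / (\<rho> * T i))) =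
         NU i * (A i \<bullet> k)\<^sup>2 / T i" for i
  proof -
    have t: "T i > 0" "NU i + T i = 1" "W i = NU i * T i" using Tpos by auto
    have d: "\<rho> * T i * (NU i * (A i \<bullet> k) / (\<rho> * T i)) = NU i * (A i \<bullet> k)" using t(1) rpos by simp
    show ?thesis unfolding t(3) by (rule coefEQE[OF t(1) rpos t(2) d])
  qed
  show ?thesis unfolding inner_QM by (simp only: fst_conv snd_conv vec_lambda_beta e)
qed

abbreviation "FE \<equiv> qp_feasible \<beta> \<rho> c gc x u"
abbreviation "QO \<equiv> qobj \<beta> \<rho> gf c gc H x u"




lemma feas_diff: assumes "FE d" "FE d'" shows "d' = d + EV (fst d' - fst d)"
proof -
  have "snd d' $ i = snd d $ i + NU i * (A i \<bullet> (fst d' - fst d)) / (\<rho> * T i)" for i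
  proof -
    have "T i > 0" using Tpos by auto
    moreover have "NU i * (A i \<bullet> fst d') - \<rho> * T i * snd d' $ i = -(c i x + Y i)"
      "NU i * (A i \<bullet> fst d) - \<rho> * T i * snd d $ i = -(c i x + Y i)"
      using assms unfolding qp_feasible_def T_def[symmetric] by blast+
    ultimately show ?thesis using g1[OF _ rpos] by (simp add: inner_diff_right)
  qed
  then show ?thesis by (simp add: prod_eq_iff vec_eq_iff)
qed

lemma feas_add: assumes "FE d" shows "FE (d + EV k)"
  unfolding qp_feasible_def T_def[symmetric]
proof
  fix i
  have "T i > 0" using Tpos by auto
  from g2[OF this rpos]
  have "NU i * (A i \<bullet> fst d + A i \<bullet> k) - \<rho> * T i * (snd d $ i + NU i * (A i \<bullet> k) / (\<rho> * T i)) = NU i * (A i \<bullet> fst d) - \<rho> * T i * snd d $ i" .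
  then show "NU i * (A i \<bullet> fst (d + EV k)) - \<rho> * T i * snd (d + EV k) $ i = - (c i x + Y i)"
    using assms unfolding qp_feasible_def T_def[symmetric] by (simp add: inner_add_right mult.assoc)
qed

lemma feas0: "FE (0, \<chi> i. (c i x + Y i) / (\<rho> * T i))"
  unfolding qp_feasible_def T_def[symmetric]
proof
  fix i
  have "T i > 0" using Tpos by auto
  from g3[OF this rpos]
  have "NU i * 0 - \<rho> * T i * ((c i x + Y i) / (\<rho> * T i)) = - (c i x + Y i)" .
  then show "NU i * (A i \<bullet> fst (0::real^'n, \<chi> i. (c i x + Y i) / (\<rho> * T i))) - \<rho> * T i * snd (0::real^'n, \<chi> i. (c i x + Y i) / (\<rho> * T i)) $ i = - (c i x + Y i)"
    by (simp add: mult.assoc)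
qed


lemma axis_sum: "(\<Sum>i\<in>UNIV. (f i :: real) *\<^sub>R axis i (1::real)) $ j = f j"
  by (simp add: axis_def if_distrib sum.If_cases cong del: if_weak_cong)

lemma fs: fixes a :: "'i::finite \<Rightarrow> real" and v :: "'i \<Rightarrow> 'zz::real_vector"
  shows "fst (\<Sum>i\<in>UNIV. a i *\<^sub>R (v i, w i)) = (\<Sum>i\<in>UNIV. a i *\<^sub>R v i)"
        "snd (\<Sum>i\<in>UNIV. a i *\<^sub>R (v i, w i)) = (\<Sum>i\<in>UNIV. a i *\<^sub>R w i)"
  by (simp_all add: fst_sum snd_sum)

lemma kkt_R: assumes "qp_kkt \<beta> \<rho> gf c gc H x u d" shows "Rv d = 0"
proof -
  obtain \<mu> :: "real^'m" where eq: "(GG, 0) + QM d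
        + (\<Sum>i\<in>UNIV. \<mu>$i *\<^sub>R (NU i *\<^sub>R A i, (- (\<rho> * T i)) *\<^sub>R axis i 1)) = 0"
    using assms unfolding qp_kkt_def T_def[symmetric] by blast
  have A: "fst ((GG, 0) + QM d
        + (\<Sum>i\<in>UNIV. \<mu>$i *\<^sub>R (NU i *\<^sub>R A i, (- (\<rho> * T i)) *\<^sub>R axis i 1)))
       = GG + fst (QM d) + (\<Sum>i\<in>UNIV. (\<mu>$i * NU i) *\<^sub>R A i)"
    by (simp only: fst_add fst_conv fs scaleR_scaleR)
  have B: "fst ((GG, 0) + QM d
        + (\<Sum>i\<in>UNIV. \<mu>$i *\<^sub>R (NU i *\<^sub>R A i, (- (\<rho> * T i)) *\<^sub>R axis i 1))) = 0"
    by (simp only: eq fst_zero)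
  have f: "GG + fst (QM d) + (\<Sum>i\<in>UNIV. (\<mu>$i * NU i) *\<^sub>R A i) = 0" by (rule trans[OF A[symmetric] B])
  have m: "\<mu>$j = snd (QM d) $ j / (\<rho> * T j)" for j
  proof -
    have S1: "snd ((GG, 0) + QM d
        + (\<Sum>i\<in>UNIV. \<mu>$i *\<^sub>R (NU i *\<^sub>R A i, (- (\<rho> * T i)) *\<^sub>R axis i 1))) $ j
       = 0 $ j + snd (QM d) $ j + \<mu>$j * (- (\<rho> * T j))"
      by (simp only: snd_add snd_conv fs scaleR_scaleR vector_add_component axis_sum)
    have S2: "snd ((GG, 0) + QM d
        + (\<Sum>i\<in>UNIV. \<mu>$i *\<^sub>R (NU i *\<^sub>R A i, (- (\<rho> * T i)) *\<^sub>R axis i 1))) $ j = 0 $ j"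
      by (simp only: eq snd_zero)
    have "0 $ j + snd (QM d) $ j + \<mu>$j * (- (\<rho> * T j)) = 0 $ j" by (rule trans[OF S1[symmetric] S2])
    then have "snd (QM d) $ j + \<mu>$j * (- (\<rho> * T j)) = 0" by (simp only: zero_index add_0_left)
    moreover have "T j > 0" using Tpos by auto
    ultimately show ?thesis using g4 rpos by blast
  qed
  show ?thesis using f unfolding m by (simp add: add.assoc)
qed

lemma Bmul: "Bk \<beta> \<rho> c gc H x u *v v = H *v v + (\<Sum>i\<in>UNIV. (NU i * (A i \<bullet> v)) *\<^sub>R A i)"
  by (rule Bmul_g)

lemma Rl_form: "Rl d = (H *v fst d + (\<Sum>i\<in>UNIV. (NU i * (A i \<bullet> fst d) + \<rho> * NU i * snd d $ i) *\<^sub>R A i))"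
proof -
  have c: "W i*(A i \<bullet> fst d) + \<rho>*W i* snd d$i + (\<rho>*W i*(A i \<bullet> fst d) + \<rho>^2*W i* snd d$i)/(\<rho>*T i)*NU i
     = NU i*(A i \<bullet> fst d) + \<rho>*NU i* snd d$i" for i
  proof -
    have t: "T i > 0" "NU i + T i = 1" "W i = NU i * T i" using Tpos by auto
    show ?thesis unfolding t(3) by (rule coefR[OF t(1) rpos t(2)])
  qed
  have "Rl d = H *v fst d + ((\<Sum>i\<in>UNIV. (W i * (A i \<bullet> fst d) + \<rho> * W i * snd d $ i) *\<^sub>R A i)
     + (\<Sum>i\<in>UNIV. (snd (QM d) $ i / (\<rho> * T i) * NU i) *\<^sub>R A i))" by (simp only: Qfst add.assoc)
  also have "(\<Sum>i\<in>UNIV. (W i * (A i \<bullet> fst d) + \<rho> * W i * snd d $ i) *\<^sub>R A i)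
     + (\<Sum>i\<in>UNIV. (snd (QM d) $ i / (\<rho> * T i) * NU i) *\<^sub>R A i)
     = (\<Sum>i\<in>UNIV. (W i * (A i \<bullet> fst d) + \<rho> * W i * snd d $ i + snd (QM d) $ i / (\<rho> * T i) * NU i) *\<^sub>R A i)"
    by (simp only: sum.distrib[symmetric] scaleR_add_left[symmetric])
  also have "\<dots> = (\<Sum>i\<in>UNIV. (NU i * (A i \<bullet> fst d) + \<rho> * NU i * snd d $ i) *\<^sub>R A i)"
    by (rule sum.cong[OF refl]) (simp only: Qsnd c)
  finally show ?thesis .
qed


lemma R_newton: assumes "FE d" "Rv d = 0" shows "newton_sys \<beta> \<rho> gf c gc H x u d"
  unfolding newton_sys_def T_def[symmetric]
proof
  have "Bk \<beta> \<rho> c gc H x u *v fst d + (\<Sum>i\<in>UNIV. (\<rho> * NU i * snd d $ i) *\<^sub>R A i) = Rl d"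
    by (simp only: Rl_form Bmul sum.distrib scaleR_add_left add.assoc)
  also have "Rl d = - GG" using add.inverse_unique[OF assms(2)] by simp
  finally show "Bk \<beta> \<rho> c gc H x u *v fst d + (\<Sum>i\<in>UNIV. (\<rho> * NU i * snd d $ i) *\<^sub>R A i) = - GG" .
  show "\<forall>i. \<rho> * NU i * (A i \<bullet> fst d) - \<rho>^2 * T i * snd d $ i = - \<rho> * (c i x + Y i)"
  proof
    fix i
    have "NU i * (A i \<bullet> fst d) - \<rho> * T i * snd d $ i = - (c i x + Y i)"
      using assms(1) unfolding qp_feasible_def T_def[symmetric] by blast
    then show "\<rho> * NU i * (A i \<bullet> fst d) - \<rho>^2 * T i * snd d $ i = - \<rho> * (c i x + Y i)" by (rule g5)
  qed
qed

lemma sol_R: assumes "qp_solution \<beta> \<rho> gf c gc H x u d" shows "Rv d = 0"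
proof -
  have F: "FE d" and mn: "\<And>d'. FE d' \<Longrightarrow> QO d \<le> QO d'" using assms unfolding qp_solution_def by auto
  define k where "k = Rv d"
  define X where "X = EV k \<bullet> QM (EV k)"
  define B where "B = 1/2 * X"
  have "0 \<le> s * (Rv d \<bullet> k) + s^2 * B" for s
  proof -
    have "QO d \<le> QO (d + EV (s *\<^sub>R k))" using mn feas_add[OF F] by blast
    also have "QO (d + EV (s *\<^sub>R k)) = QO d + Rv d \<bullet> (s *\<^sub>R k) + 1/2 * (EV (s *\<^sub>R k) \<bullet> QM (EV (s *\<^sub>R k)))"
      by (simp only: qexp grad2)
    also have "EV (s *\<^sub>R k) \<bullet> QM (EV (s *\<^sub>R k)) = s^2 * X"
      unfolding X_def EV_scale unfolding QM_scale inner_scaleR_left inner_scaleR_right power2_eq_square by (simp only: mult.assoc)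
    also have "Rv d \<bullet> (s *\<^sub>R k) = s * (Rv d \<bullet> k)" by (rule inner_scaleR_right)
    finally have "QO d \<le> QO d + s * (Rv d \<bullet> k) + 1 / 2 * (s\<^sup>2 * X)" .
    moreover have "s^2 * B = 1/2 * (s^2 * X)" unfolding B_def by simp
    ultimately show ?thesis by linarith
  qed
  moreover have "Rv d \<bullet> k \<ge> 0" unfolding k_def by (rule inner_ge_zero)
  ultimately have "Rv d \<bullet> k = 0" using quad0[of "Rv d \<bullet> k" B] by blast
  then show ?thesis unfolding k_def by (rule iffD1[OF inner_eq_zero_iff])
qed

abbreviation "PD \<equiv> (\<forall>dx::real^'n. dx \<noteq> 0 \<longrightarrow> dx \<bullet> (H *v dx) + (\<Sum>i\<in>UNIV. NU i * (A i \<bullet> dx)^2) > 0)"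

lemma EQE_ge: "k \<bullet> (H *v k) + (\<Sum>i\<in>UNIV. NU i * (A i \<bullet> k)^2) \<le> EV k \<bullet> QM (EV k)"
proof -
  have "(\<Sum>i\<in>UNIV. NU i * (A i \<bullet> k)^2) \<le> (\<Sum>i\<in>UNIV. NU i * (A i \<bullet> k)^2 / T i)"
  proof (rule sum_mono)
    fix i
    have "T i > 0" "T i \<le> 1" "NU i > 0" using Tpos[of i] by auto
    then show "NU i * (A i \<bullet> k)^2 \<le> NU i * (A i \<bullet> k)^2 / T i" by (intro le_div_t) auto
  qed
  then show ?thesis unfolding EQE by linarith
qed

lemma EQE_pos: assumes PD "k \<noteq> 0" shows "EV k \<bullet> QM (EV k) > 0"
proof -
  have "k \<bullet> (H *v k) + (\<Sum>i\<in>UNIV. NU i * (A i \<bullet> k)^2) > 0" using assms by blast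
  then show ?thesis using EQE_ge[of k] by linarith
qed

lemma EV0: "EV 0 = 0"
  by (simp add: prod_eq_iff vec_eq_iff)

lemma EQE_nn: assumes PD shows "EV k \<bullet> QM (EV k) \<ge> 0"
proof (cases "k = 0")
  case True
  have "EV k \<bullet> QM (EV k) = 0" unfolding True EV0 by (simp add: inner_QM)
  then show ?thesis by simp
next
  case False then show ?thesis using EQE_pos[OF assms False] by linarith
qed

lemma R_sol: assumes PD "FE d" "Rv d = 0" shows "qp_solution \<beta> \<rho> gf c gc H x u d"
  unfolding qp_solution_def
proof (intro conjI allI impI)
  show "FE d" by fact
  fix d' assume "FE d'"
  then have e: "d' = d + EV (fst d' - fst d)" using feas_diff assms(2) by blast
  have "QO d' = QO d + Rv d \<bullet> (fst d' - fst d) + 1/2 * (EV (fst d' - fst d) \<bullet> QM (EV (fst d' - fst d)))"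
    by (subst e) (simp only: qexp grad2)
  moreover have "Rv d \<bullet> (fst d' - fst d) = 0" unfolding assms(3) by (rule inner_zero_left)
  ultimately show "QO d \<le> QO d'" using EQE_nn[OF assms(1), of "fst d' - fst d"] by linarith
qed

lemma uniq: assumes PD "qp_solution \<beta> \<rho> gf c gc H x u d" "qp_solution \<beta> \<rho> gf c gc H x u d'"
  shows "d' = d"
proof -
  have F: "FE d" "FE d'" using assms(2,3) unfolding qp_solution_def by auto
  have R: "Rv d = 0" using sol_R[OF assms(2)] .
  have mn: "QO d' \<le> QO d" using assms(3) F(1) unfolding qp_solution_def by blast
  define k where "k = fst d' - fst d"
  have e: "d' = d + EV k" unfolding k_def using feas_diff F by blast
  have "QO d' = QO d + Rv d \<bullet> k + 1/2 * (EV k \<bullet> QM (EV k))"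
    by (subst e) (simp only: qexp grad2)
  moreover have "Rv d \<bullet> k = 0" unfolding R by (rule inner_zero_left)
  ultimately have le: "EV k \<bullet> QM (EV k) \<le> 0" using mn by linarith
  have "k = 0"
  proof (rule ccontr)
    assume "k \<noteq> 0"
    then have "EV k \<bullet> QM (EV k) > 0" by (rule EQE_pos[OF assms(1)])
    then show False using le by linarith
  qed
  then have "d' = d + EV 0" using e by (simp only:)
  then show ?thesis by (simp only: EV0 add_0_right)
qed

lemma exist: assumes PD shows "\<exists>d. FE d \<and> Rv d = 0"
proof -
  define f where "f k = Rl (EV k)" for k
  have lin: "linear f"
  proof (rule linearI)
    fix a b :: "real^'n" and r :: real
    show "f (a + b) = f a + f b" unfolding f_def by (simp only: EV_add Rl_add)
    show "f (r *\<^sub>R a) = r *\<^sub>R f a" unfolding f_def by (simp only: EV_scale Rl_scale)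
  qed
  have "inj f" unfolding linear_injective_0[OF lin]
  proof (intro allI impI)
    fix k assume fk: "f k = 0"
    have "EV k \<bullet> QM (EV k) = QM (EV k) \<bullet> EV k" by (rule inner_commute)
    also have "\<dots> = f k \<bullet> k" unfolding f_def by (rule grad)
    finally have "EV k \<bullet> QM (EV k) = 0" unfolding fk by (simp only: inner_zero_left)
    show "k = 0"
    proof (rule ccontr)
      assume "k \<noteq> 0"
      then have "EV k \<bullet> QM (EV k) > 0" by (rule EQE_pos[OF assms])
      then show False using \<open>EV k \<bullet> QM (EV k) = 0\<close> by linarith
    qed
  qed
  then have "surj f" by (rule linear_inj_imp_surj[OF lin])
  define d0 :: "(real^'n) \<times> (real^'m)" where "d0 = (0, \<chi> i. (c i x + Y i) / (\<rho> * T i))"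
  obtain h where h0: "- Rv d0 = f h" using surjD[OF \<open>surj f\<close>] by blast
  note h = h0[symmetric]
  have "FE (d0 + EV h)" unfolding d0_def by (rule feas_add[OF feas0])
  moreover have "Rv (d0 + EV h) = 0" unfolding Rl_add h[unfolded f_def] by (rule vcancel)
  ultimately show ?thesis by blast
qed

lemma main: "(\<forall>d. qp_kkt \<beta> \<rho> gf c gc H x u d \<longrightarrow> newton_sys \<beta> \<rho> gf c gc H x u d)
       \<and> (\<forall>d. qp_solution \<beta> \<rho> gf c gc H x u d \<longrightarrow> newton_sys \<beta> \<rho> gf c gc H x u d)
       \<and> ((\<forall>dx::real^'n. dx \<noteq> 0 \<longrightarrow>
             dx \<bullet> (H *v dx) + (\<Sum>i\<in>UNIV. nuk \<beta> \<rho> c x u i * (gc i x \<bullet> dx)^2) > 0)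
          \<longrightarrow> (\<exists>!d. qp_solution \<beta> \<rho> gf c gc H x u d)
              \<and> (\<exists>d. newton_sys \<beta> \<rho> gf c gc H x u d))"
proof (intro conjI allI impI)
  fix d assume "qp_kkt \<beta> \<rho> gf c gc H x u d"
  then show "newton_sys \<beta> \<rho> gf c gc H x u d"
    using R_newton kkt_R unfolding qp_kkt_def by blast
next
  fix d assume "qp_solution \<beta> \<rho> gf c gc H x u d"
  then show "newton_sys \<beta> \<rho> gf c gc H x u d"
    using R_newton sol_R unfolding qp_solution_def by blast
next
  assume P: PD
  obtain d where d: "FE d" "Rv d = 0" using exist[OF P] by blast
  have s: "qp_solution \<beta> \<rho> gf c gc H x u d" using R_sol[OF P d] .
  show "\<exists>!d. qp_solution \<beta> \<rho> gf c gc H x u d"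
    using s uniq[OF P] by blast
  show "\<exists>d. newton_sys \<beta> \<rho> gf c gc H x u d" using R_newton[OF d] by blast
qed

end

theorem lemma3p1:
  fixes \<beta> \<rho> :: real
    and f :: "real^'n \<Rightarrow> real" and gf :: "real^'n \<Rightarrow> real^'n"
    and c :: "'m::finite \<Rightarrow> real^'n \<Rightarrow> real" and gc :: "'m \<Rightarrow> real^'n \<Rightarrow> real^'n"
    and H :: "real^'n^'n" and x :: "real^'n" and u :: "real^'m"
  assumes "\<beta> > 0" and "\<rho> > 0"
    and "\<And>z. (f has_derivative (\<lambda>h. gf z \<bullet> h)) (at z)"
    and "\<And>i z. (c i has_derivative (\<lambda>h. gc i z \<bullet> h)) (at z)"
    and "transpose H = H"
  shows "(\<forall>d. qp_kkt \<beta> \<rho> gf c gc H x u d \<longrightarrow> newton_sys \<beta> \<rho> gf c gc H x u d)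
       \<and> (\<forall>d. qp_solution \<beta> \<rho> gf c gc H x u d \<longrightarrow> newton_sys \<beta> \<rho> gf c gc H x u d)
       \<and> ((\<forall>dx::real^'n. dx \<noteq> 0 \<longrightarrow>
             dx \<bullet> (H *v dx) + (\<Sum>i\<in>UNIV. nuk \<beta> \<rho> c x u i * (gc i x \<bullet> dx)^2) > 0)
          \<longrightarrow> (\<exists>!d. qp_solution \<beta> \<rho> gf c gc H x u d)
              \<and> (\<exists>d. newton_sys \<beta> \<rho> gf c gc H x u d))"
  using main[OF assms(1,2,5)] by blast

end
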